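(* Let $a,b,c>0$ and let $d,e$ be real numbers, not in $\{0,-1,-2,\dots\}$, such that $de\ge 3abc$ and $$d+e\ \ge\ \max\Big\{a+b+c,\ \alpha(a,b,c),\ 3(ab+bc+ac)-7abc\Big\},\qquad \alpha(a,b,c)=\tfrac13\big(2(ab+bc+ac)+3(a+b+c)-6abc-1\big).$$ Then $f(z)=z\,{}_3F_2(a,b,c;d,e;z^2)$ is close-to-convex in $\mathbb{D}$ with respect to $\frac12\log\big((1+z)/(1-z)\big)$.
   Context: $\mathbb{D}=\{z\in\mathbb{C}:|z|<1\}$. For $x\in\mathbb{C}$, $(x)_0=1$ and $(x)_n=x(x+1)\cdots(x+n-1)$ for $n\ge1$. The Clausen hypergeometric function is ${}_3F_2(a,b,c;d,e;z)=\sum_{n=0}^\infty \frac{(a)_n(b)_n(c)_n}{(d)_n(e)_n(1)_n}z^n$ for $|z|<1$ (with $d,e\notin\{0,-1,-2,\dots\}$). A normalized analytic function $f$ on $\mathbb{D}$ ($f(0)=0$, $f'(0)=1$) is close-to-convex with respect to a convex univalent function $g$ on $\mathbb{D}$ if $f$ is univalent on $\mathbb{D}$ and $\operatorname{Re}\big(f'(z)/g'(z)\big)>0$ for all $z\in\mathbb{D}$. Here $g(z)=\frac12\log\frac{1+z}{1-z}$, which is convex univalent on $\mathbb{D}$, with $g'(z)=1/(1-z^2)$. *)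

theory Defs
  imports "HOL-Analysis.Analysis"
begin

text \<open>Clausen hypergeometric function 3F2(a,b,c;d,e;z) as its power series (meant for |z|<1).\<close>
definition hyp3F2 :: "real \<Rightarrow> real \<Rightarrow> real \<Rightarrow> real \<Rightarrow> real \<Rightarrow> complex \<Rightarrow> complex" where
  "hyp3F2 a b c d e z =
     (\<Sum>n. complex_of_real ((pochhammer a n * pochhammer b n * pochhammer c n) /
            (pochhammer d n * pochhammer e n * pochhammer 1 n)) * z ^ n)"

definition close_to_convex_wrt :: "(complex \<Rightarrow> complex) \<Rightarrow> (complex \<Rightarrow> complex) \<Rightarrow> bool" where
  "close_to_convex_wrt f g \<longleftrightarrow>
     f holomorphic_on ball 0 1 \<and> f 0 = 0 \<and> deriv f 0 = 1 \<and>
     inj_on f (ball 0 1) \<and>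
     (\<forall>z\<in>ball 0 1. Re (deriv f z / deriv g z) > 0)"

definition alpha3 :: "real \<Rightarrow> real \<Rightarrow> real \<Rightarrow> real" where
  "alpha3 a b c = (2 * (a*b + b*c + a*c) + 3 * (a + b + c) - 6 * a*b*c - 1) / 3"

end

theory Submission
  imports Defs
begin

definition cA :: "real \<Rightarrow> real \<Rightarrow> real \<Rightarrow> real \<Rightarrow> real \<Rightarrow> nat \<Rightarrow> real" where
  "cA a b c d e n = (pochhammer a n * pochhammer b n * pochhammer c n) /
            (pochhammer d n * pochhammer e n * pochhammer 1 n)"

lemma poly_ineq:
  fixes a b c d e x :: real
  assumes "a > 0" "b > 0" "c > 0" "x \<ge> 0"
    and q: "d * e \<ge> 3 * a * b * c"
    and p1: "d + e \<ge> a + b + c" and p2: "d + e \<ge> alpha3 a b c"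
    and p3: "d + e \<ge> 3 * (a*b + b*c + a*c) - 7 * a*b*c"
  shows "(2*x+3)*(a+x)*(b+x)*(c+x) \<le> (2*x+1)*(d+x)*(e+x)*(x+1)"
proof -
  define p where "p = d + e"
  define qq where "qq = d * e"
  define ta where "ta = a+b+c"
  define tb where "tb = a*b+b*c+a*c"
  define tc where "tc = a*b*c"
  have id: "(2*x+1)*(d+x)*(e+x)*(x+1) - (2*x+3)*(a+x)*(b+x)*(c+x)
     = 2*(p-ta)*x^3 + (2*qq+3*p+1-2*tb-3*ta)*x^2 + (3*qq+p-2*tc-3*tb)*x + (qq-3*tc)"
    unfolding p_def qq_def ta_def tb_def tc_def by (simp add: algebra_simps power2_eq_square power3_eq_cube)
  have h1: "p - ta \<ge> 0" using p1 unfolding p_def ta_def by simp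
  have h2: "2*qq+3*p+1-2*tb-3*ta \<ge> 0" using p2 q unfolding alpha3_def p_def qq_def ta_def tb_def tc_def by simp
  have h3: "3*qq+p-2*tc-3*tb \<ge> 0" using p3 q unfolding p_def qq_def ta_def tb_def tc_def by simp
  have h4: "qq-3*tc \<ge> 0" using q unfolding qq_def tc_def by simp
  have "0 \<le> 2*(p-ta)*x^3 + (2*qq+3*p+1-2*tb-3*ta)*x^2 + (3*qq+p-2*tc-3*tb)*x + (qq-3*tc)"
    using h1 h2 h3 h4 \<open>x\<ge>0\<close> by (intro add_nonneg_nonneg mult_nonneg_nonneg) auto
  then show ?thesis using id by linarith
qed

lemma cA_Suc:
  assumes "d > 0" "e > 0"
  shows "cA a b c d e (Suc n) = cA a b c d e n * ((a+n)*(b+n)*(c+n) / ((d+n)*(e+n)*(1+n)))"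
proof -
  have "pochhammer d n > 0" "pochhammer e n > 0" "pochhammer (1::real) n > 0"
    using assms by (auto intro: pochhammer_pos)
  moreover have "d + n > 0" "e + n > 0" using assms by auto
  ultimately show ?thesis unfolding cA_def pochhammer_Suc by (simp add: field_simps)
qed

lemma cA_pos:
  assumes "a > 0" "b > 0" "c > 0" "d > 0" "e > 0"
  shows "cA a b c d e n > 0"
  unfolding cA_def using assms by (intro divide_pos_pos mult_pos_pos pochhammer_pos) auto

lemma cA_0: "cA a b c d e 0 = 1" unfolding cA_def by simp

lemma cA_dec:
  fixes a b c d e :: real
  assumes "a > 0" "b > 0" "c > 0" "d > 0" "e > 0"
    and q: "d * e \<ge> 3 * a * b * c"
    and p1: "d + e \<ge> a + b + c" and p2: "d + e \<ge> alpha3 a b c"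
    and p3: "d + e \<ge> 3 * (a*b + b*c + a*c) - 7 * a*b*c"
  shows "(2*real (Suc n)+1) * cA a b c d e (Suc n) \<le> (2*real n+1) * cA a b c d e n"
proof -
  let ?x = "real n"
  have P: "(2*?x+3)*(a+?x)*(b+?x)*(c+?x) \<le> (2*?x+1)*(d+?x)*(e+?x)*(?x+1)"
    using poly_ineq[OF assms(1-3) _ q p1 p2 p3] by simp
  have pos: "(d+?x)*(e+?x)*(1+?x) > 0" using assms by auto
  have A: "cA a b c d e n > 0" using cA_pos assms by blast
  have "(2*real (Suc n)+1) * ((a+?x)*(b+?x)*(c+?x) / ((d+?x)*(e+?x)*(1+?x))) \<le> 2*?x+1"
    using P pos by (simp add: divide_le_eq algebra_simps)
  then have "(2*real (Suc n)+1) * ((a+?x)*(b+?x)*(c+?x) / ((d+?x)*(e+?x)*(1+?x))) * cA a b c d e n \<le> (2*?x+1) * cA a b c d e n"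
    using A by (intro mult_right_mono) auto
  then show ?thesis using cA_Suc[OF assms(4,5), of a b c n] by (simp add: algebra_simps)
qed


lemma B_le1:
  fixes A :: "nat \<Rightarrow> real"
  assumes A0: "A 0 = 1" and dec: "\<And>n. (2*real (Suc n)+1) * A (Suc n) \<le> (2*real n+1) * A n"
  shows "(2*real n+1) * A n \<le> 1"
proof (induction n)
  case 0 then show ?case using A0 by simp
next
  case (Suc n) then show ?case using dec[of n] by linarith
qed

lemma sm_geom_bound:
  fixes w :: complex and C :: "nat \<Rightarrow> real"
  assumes "norm w < 1" "\<And>n. \<bar>C n\<bar> \<le> 1"
  shows "summable (\<lambda>n. complex_of_real (C n) * w^n)"
proof (rule summable_comparison_test'[where g="\<lambda>n. norm w ^ n" and N=0])
  show "summable (\<lambda>n. norm w ^ n)" using assms by (simp add: summable_geometric)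
  fix n show "norm (complex_of_real (C n) * w ^ n) \<le> norm w ^ n"
    using assms(2)[of n] by (simp add: norm_mult norm_power mult_left_le_one_le)
qed

lemma deriv_identity:
  fixes A :: "nat \<Rightarrow> real" and w :: complex
  assumes A0: "A 0 = 1" and pos: "\<And>n. A n \<ge> 0"
    and dec: "\<And>n. (2*real (Suc n)+1) * A (Suc n) \<le> (2*real n+1) * A n"
    and w: "norm w < 1"
  shows "((\<lambda>w. \<Sum>n. complex_of_real (A n) * w^n) has_field_derivative
           (\<Sum>n. diffs (\<lambda>n. complex_of_real (A n)) n * w^n)) (at w)"
    and "(\<Sum>n. complex_of_real (A n) * w^n) + 2 * w * (\<Sum>n. diffs (\<lambda>n. complex_of_real (A n)) n * w^n)
          = (\<Sum>n. complex_of_real ((2*real n+1) * A n) * w^n)"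
proof -
  have Ble: "\<And>n. (2*real n+1) * A n \<le> 1" using B_le1[OF A0 dec] .
  have Ale: "\<And>n. \<bar>A n\<bar> \<le> 1"
  proof -
    fix n have "A n \<le> (2*real n+1) * A n" using pos[of n] by (simp add: algebra_simps)
    then show "\<bar>A n\<bar> \<le> 1" using Ble[of n] pos[of n] by simp
  qed
  have smA: "\<And>z. norm z < 1 \<Longrightarrow> summable (\<lambda>n. complex_of_real (A n) * z^n)"
    using sm_geom_bound Ale by blast
  show "((\<lambda>w. \<Sum>n. complex_of_real (A n) * w^n) has_field_derivative
           (\<Sum>n. diffs (\<lambda>n. complex_of_real (A n)) n * w^n)) (at w)"
    by (rule termdiffs_strong'[where K=1]) (use smA w in auto)
  have smD: "summable (\<lambda>n. complex_of_real (real (Suc n) * A (Suc n)) * w^n)"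
  proof (rule sm_geom_bound[OF w])
    fix n have "real (Suc n) * A (Suc n) \<le> (2*real (Suc n)+1) * A (Suc n)" using pos[of "Suc n"]
      by (intro mult_right_mono) auto
    then show "\<bar>real (Suc n) * A (Suc n)\<bar> \<le> 1" using Ble[of "Suc n"] pos[of "Suc n"] by simp
  qed
  have dif: "diffs (\<lambda>n. complex_of_real (A n)) n = complex_of_real (real (Suc n) * A (Suc n))" for n
    by (simp add: diffs_def)
  define g where "g n = complex_of_real (real n * A n) * w^n" for n
  have gS: "(\<lambda>n. g (Suc n)) = (\<lambda>n. w * (complex_of_real (real (Suc n) * A (Suc n)) * w^n))"
    by (auto simp: g_def algebra_simps)
  have sg: "(\<lambda>n. g (Suc n)) sums (w * (\<Sum>n. diffs (\<lambda>n. complex_of_real (A n)) n * w^n))"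
    unfolding gS dif by (intro sums_mult summable_sums smD)
  then have sg': "g sums (w * (\<Sum>n. diffs (\<lambda>n. complex_of_real (A n)) n * w^n))"
    using sums_Suc_iff[of g] by (simp add: g_def)
  have sA: "(\<lambda>n. complex_of_real (A n) * w^n) sums (\<Sum>n. complex_of_real (A n) * w^n)"
    using smA[OF w] by (simp add: summable_sums)
  have "(\<lambda>n. complex_of_real (A n) * w^n + 2 * g n) sums
      ((\<Sum>n. complex_of_real (A n) * w^n) + 2 * (w * (\<Sum>n. diffs (\<lambda>n. complex_of_real (A n)) n * w^n)))"
    by (intro sums_add sums_mult sA sg')
  moreover have "(\<lambda>n. complex_of_real (A n) * w^n + 2 * g n) = (\<lambda>n. complex_of_real ((2*real n+1) * A n) * w^n)"
    by (auto simp: g_def algebra_simps)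
  ultimately show "(\<Sum>n. complex_of_real (A n) * w^n) + 2 * w * (\<Sum>n. diffs (\<lambda>n. complex_of_real (A n)) n * w^n)
          = (\<Sum>n. complex_of_real ((2*real n+1) * A n) * w^n)"
    by (simp add: sums_iff mult.assoc)
qed

lemma Re_pos:
  fixes A :: "nat \<Rightarrow> real" and w :: complex
  assumes A0: "A 0 = 1" and pos: "\<And>n. A n \<ge> 0"
    and dec: "\<And>n. (2*real (Suc n)+1) * A (Suc n) \<le> (2*real n+1) * A n"
    and w: "norm w < 1"
  shows "Re ((\<Sum>n. complex_of_real ((2*real n+1) * A n) * w^n) * (1 - w)) > 0"
proof -
  define B where "B n = (2*real n+1) * A n" for n
  have Ble: "\<And>n. B n \<le> 1" using B_le1[OF A0 dec] unfolding B_def .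
  have Bge: "\<And>n. B n \<ge> 0" using pos unfolding B_def by simp
  have Bdec: "\<And>n. B (Suc n) \<le> B n" using dec unfolding B_def .
  have B0: "B 0 = 1" using A0 unfolding B_def by simp
  have smB: "summable (\<lambda>n. complex_of_real (B n) * w^n)"
    using sm_geom_bound[OF w, of B] Ble Bge by (simp add: abs_le_iff)
  define P where "P = (\<Sum>n. complex_of_real (B n) * w^n)"
  have sP: "(\<lambda>n. complex_of_real (B n) * w^n) sums P" using smB P_def by (simp add: summable_sums)
  have s1: "(\<lambda>n. complex_of_real (B (Suc n)) * w^(Suc n)) sums (P - 1)"
    using sP sums_Suc_iff[of "\<lambda>n. complex_of_real (B n) * w^n" "P - 1"] B0 by simp
  have s2: "(\<lambda>n. complex_of_real (B n) * w^(Suc n)) sums (w * P)"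
    using sums_mult[OF sP, of w] by (simp add: algebra_simps)
  define S where "S = P - 1 - w * P"
  have sS: "(\<lambda>n. complex_of_real (B (Suc n) - B n) * w^(Suc n)) sums S"
    using sums_diff[OF s1 s2] unfolding S_def by (simp add: algebra_simps)
  have "decseq B" using Bdec by (simp add: decseq_Suc_iff)
  then obtain L where L: "B \<longlonglongrightarrow> L" "\<forall>i. L \<le> B i" using decseq_convergent[of B 0] Bge by blast
  have L0: "L \<ge> 0" using L(1) Bge by (intro LIMSEQ_le_const) auto
  have tel: "(\<lambda>n. B n - B (Suc n)) sums (1 - L)" using telescope_sums'[OF L(1)] B0 by simp
  have tel2: "(\<lambda>n. (B n - B (Suc n)) * norm w) sums ((1 - L) * norm w)"
    using sums_mult2[OF tel] .
  have "norm S \<le> (1 - L) * norm w"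
  proof -
    have "norm (\<Sum>n. complex_of_real (B (Suc n) - B n) * w^(Suc n)) \<le> (\<Sum>n. (B n - B (Suc n)) * norm w)"
    proof (rule norm_suminf_le)
      fix n
      have "norm (complex_of_real (B (Suc n) - B n) * w^(Suc n)) = (B n - B (Suc n)) * (norm w * norm w ^ n)"
        using Bdec[of n] by (simp add: norm_mult norm_power del: of_real_diff)
      also have "\<dots> \<le> (B n - B (Suc n)) * norm w"
        using Bdec[of n] w by (intro mult_left_mono mult_right_le_one_le power_le_one) auto
      finally show "norm (complex_of_real (B (Suc n) - B n) * w^(Suc n)) \<le> (B n - B (Suc n)) * norm w" .
    qed (use tel2 in \<open>simp add: sums_iff\<close>)
    then show ?thesis using sS tel2 by (simp add: sums_iff)
  qed
  also have "\<dots> \<le> norm w" using L0 Ble[of 0] B0 L(2) by (smt (verit) mult_left_le_one_le norm_ge_zero)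
  finally have nS: "norm S < 1" using w by simp
  have "P * (1 - w) = 1 + S" unfolding S_def by (simp add: algebra_simps)
  moreover have "Re S \<ge> - norm S" using abs_Re_le_cmod[of S] by linarith
  ultimately have "Re (P * (1 - w)) > 0" using nS by simp
  then show ?thesis unfolding P_def B_def .
qed


lemma f_deriv:
  fixes A :: "nat \<Rightarrow> real" and z :: complex
  assumes A0: "A 0 = 1" and pos: "\<And>n. A n \<ge> 0"
    and dec: "\<And>n. (2*real (Suc n)+1) * A (Suc n) \<le> (2*real n+1) * A n"
    and z: "norm z < 1"
  shows "((\<lambda>z. z * (\<Sum>n. complex_of_real (A n) * (z^2)^n)) has_field_derivative
          (\<Sum>n. complex_of_real ((2*real n+1) * A n) * (z^2)^n)) (at z)"
proof -
  have w: "norm (z^2) < 1" using z by (simp add: norm_power power_less_one_iff)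
  note D = deriv_identity[OF A0 pos dec w]
  have DH: "((\<lambda>z. (\<Sum>n. complex_of_real (A n) * (z^2)^n)) has_field_derivative
         (\<Sum>n. diffs (\<lambda>n. complex_of_real (A n)) n * (z^2)^n) * (2 * z)) (at z)"
  proof -
    have Dsq: "((\<lambda>z. z^2) has_field_derivative 2 * z) (at z)" by (auto intro!: derivative_eq_intros)
    show ?thesis using DERIV_chain2[where g="\<lambda>z. z^2" and x=z, OF D(1) Dsq] by simp
  qed
  have "((\<lambda>z. z * (\<Sum>n. complex_of_real (A n) * (z^2)^n)) has_field_derivative
          1 * (\<Sum>n. complex_of_real (A n) * (z^2)^n) + z * ((\<Sum>n. diffs (\<lambda>n. complex_of_real (A n)) n * (z^2)^n) * (2 * z))) (at z)"
    using DERIV_mult'[OF DERIV_ident DH] by (simp add: add.commute)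
  moreover have "1 * (\<Sum>n. complex_of_real (A n) * (z^2)^n) + z * ((\<Sum>n. diffs (\<lambda>n. complex_of_real (A n)) n * (z^2)^n) * (2 * z))
     = (\<Sum>n. complex_of_real ((2*real n+1) * A n) * (z^2)^n)"
    using D(2) by (simp add: algebra_simps power2_eq_square)
  ultimately show ?thesis by simp
qed

lemma Re_frac_pos:
  fixes z :: complex assumes "norm z < 1" shows "Re ((1 + z) / (1 - z)) > 0"
proof -
  have nz: "1 - z \<noteq> 0" using assms by auto
  have "Re ((1 + z) / (1 - z)) = (Re (1 + z) * Re (1 - z) + Im (1 + z) * Im (1 - z)) / (cmod (1 - z))^2"
    by (rule Re_divide')
  also have "Re (1 + z) * Re (1 - z) + Im (1 + z) * Im (1 - z) = 1 - (Re z)^2 - (Im z)^2"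
    by (simp add: algebra_simps power2_eq_square)
  also have "1 - (Re z)^2 - (Im z)^2 = 1 - (cmod z)^2" by (simp add: cmod_power2)
  finally have e: "Re ((1 + z) / (1 - z)) = (1 - (cmod z)^2) / (cmod (1 - z))^2" .
  have "(cmod z)^2 < 1" using assms by (simp add: power_less_one_iff)
  moreover have "(cmod (1 - z))^2 > 0" using nz by simp
  ultimately show ?thesis unfolding e by (intro divide_pos_pos) auto
qed

lemma g_deriv:
  fixes z :: complex assumes z: "norm z < 1"
  shows "((\<lambda>z. Ln ((1 + z) / (1 - z)) / 2) has_field_derivative 1 / ((1 + z) * (1 - z))) (at z)"
proof -
  have nz: "1 - z \<noteq> 0" "1 + z \<noteq> 0" using z by (auto simp: add_eq_0_iff)
  have "(1 + z) / (1 - z) \<notin> \<real>\<^sub>\<le>\<^sub>0" using Re_frac_pos[OF z] by (auto simp: nonpos_Reals_def)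
  then have L: "(Ln has_field_derivative inverse ((1 + z) / (1 - z))) (at ((1 + z) / (1 - z)))"
    by (rule has_field_derivative_Ln)
  have Q: "((\<lambda>z. (1 + z) / (1 - z)) has_field_derivative 2 / (1 - z)^2) (at z)"
    using nz by (auto intro!: derivative_eq_intros simp: field_simps power2_eq_square)
  have "((\<lambda>z. Ln ((1 + z) / (1 - z)) / 2) has_field_derivative (inverse ((1 + z) / (1 - z)) * (2 / (1 - z)^2)) / 2) (at z)"
    using DERIV_chain2[OF L Q] by (intro DERIV_cdivide) 
  moreover have "(inverse ((1 + z) / (1 - z)) * (2 / (1 - z)^2)) / 2 = 1 / ((1 + z) * (1 - z))"
  proof -
    have "(inverse ((1 + z) / (1 - z)) * (2 / (1 - z)^2)) / 2 = ((1 - z) / (1 + z)) * (1 / ((1 - z) * (1 - z)))"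
    proof -
      have gen: "(inverse (q / p) * (2 / p^2)) / 2 = (p / q) * (1 / (p * p))" if "p \<noteq> 0" "q \<noteq> 0" for p q :: complex
        using that by (simp add: field_simps power2_eq_square)
      show ?thesis using gen[OF nz] .
    qed
    also have "\<dots> = 1 / ((1 + z) * (1 - z))"
    proof -
      have gen: "(p / q) * (1 / (p * p)) = 1 / (q * p)" if "p \<noteq> 0" "q \<noteq> 0" for p q :: complex
        using that by (simp add: field_simps)
      show ?thesis using gen[OF nz] .
    qed
    finally show ?thesis .
  qed
  ultimately show ?thesis by simp
qed

definition phi :: "complex \<Rightarrow> complex" where "phi w = (exp (2*w) - 1) / (exp (2*w) + 1)"

lemma phi_props:
  fixes w :: complex assumes "\<bar>Im w\<bar> < pi/4"
  shows "norm (phi w) < 1" "(phi has_field_derivative (1 - (phi w)^2)) (at w)"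
proof -
  define E where "E = exp (2*w)"
  have "Re E = exp (Re (2*w)) * cos (Im (2*w))" unfolding E_def by (rule Re_exp)
  moreover have "cos (Im (2*w)) > 0" using assms by (intro cos_gt_zero_pi) auto
  ultimately have RE: "Re E > 0" by simp
  have nz: "E + 1 \<noteq> 0" using RE by (metis add_eq_0_iff minus_complex.simps(1) one_complex.simps(1) neg_less_0_iff_less zero_less_one not_less_iff_gr_or_eq uminus_complex.sel(1))
  have "(cmod (E - 1))^2 = (Re E - 1)^2 + (Im E)^2" by (simp add: cmod_power2)
  moreover have "(cmod (E + 1))^2 = (Re E + 1)^2 + (Im E)^2" by (simp add: cmod_power2)
  ultimately have "(cmod (E - 1))^2 < (cmod (E + 1))^2"
    using RE by (simp add: power2_eq_square algebra_simps)
  then have "cmod (E - 1) < cmod (E + 1)" by (simp add: power_less_imp_less_base)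
  then show "norm (phi w) < 1" unfolding phi_def E_def[symmetric] using nz by (simp add: norm_divide divide_less_eq)
  have "(phi has_field_derivative ((2*E) * (E + 1) - (E - 1) * (2*E)) / (E + 1)^2) (at w)"
    unfolding phi_def E_def using nz unfolding E_def
    by (auto intro!: derivative_eq_intros simp: power2_eq_square)
  moreover have "((2*E) * (E + 1) - (E - 1) * (2*E)) / (E + 1)^2 = 1 - (phi w)^2"
  proof -
    have "1 - (phi w)^2 = 1 - (E - 1)^2 / (E + 1)^2" unfolding phi_def E_def[symmetric] by (simp add: power_divide)
    also have "\<dots> = ((E + 1)^2 - (E - 1)^2) / (E + 1)^2" using nz by (simp add: diff_divide_distrib)
    also have "(E + 1)^2 - (E - 1)^2 = (2*E) * (E + 1) - (E - 1) * (2*E)" by (simp add: power2_eq_square algebra_simps)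
    finally show ?thesis by simp
  qed
  ultimately show "(phi has_field_derivative (1 - (phi w)^2)) (at w)" by simp
qed

lemma g_in_strip:
  fixes z :: complex assumes z: "norm z < 1"
  shows "\<bar>Im (Ln ((1 + z) / (1 - z)) / 2)\<bar> < pi/4" "phi (Ln ((1 + z) / (1 - z)) / 2) = z"
proof -
  have R: "Re ((1 + z) / (1 - z)) > 0" by (rule Re_frac_pos[OF z])
  show "\<bar>Im (Ln ((1 + z) / (1 - z)) / 2)\<bar> < pi/4" using Re_Ln_pos_lt_imp[OF R] by simp
  have nz: "1 - z \<noteq> 0" using z by auto
  have u0: "(1 + z) / (1 - z) \<noteq> 0" using R by auto
  define u where "u = (1 + z) / (1 - z)"
  have "exp (2 * (Ln ((1 + z) / (1 - z)) / 2)) = u" using exp_Ln[OF u0] u_def by simp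
  then have "phi (Ln ((1 + z) / (1 - z)) / 2) = (u - 1) / (u + 1)" unfolding phi_def by simp
  also have "u - 1 = 2 * z / (1 - z)" unfolding u_def using nz by (simp add: field_simps)
  also have "u + 1 = 2 / (1 - z)" unfolding u_def using nz by (simp add: field_simps)
  also have "2 * z / (1 - z) / (2 / (1 - z)) = z" using nz by (simp add: field_simps)
  finally show "phi (Ln ((1 + z) / (1 - z)) / 2) = z" .
qed


lemma strip_segment:
  assumes "\<bar>Im w1\<bar> < pi/4" "\<bar>Im w2\<bar> < pi/4" "u \<in> closed_segment w1 w2"
  shows "\<bar>Im u\<bar> < pi/4"
proof -
  obtain t where t: "0 \<le> t" "t \<le> 1" "u = (1 - t) *\<^sub>R w1 + t *\<^sub>R w2"
    using assms(3) unfolding closed_segment_def by blast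
  have I: "Im u = (1 - t) * Im w1 + t * Im w2" using t(3) by simp
  have "(1 - t) * Im w1 + t * Im w2 < pi/4"
    using assms(1,2) t by (intro convex_bound_lt) auto
  moreover have "(1 - t) * (- Im w1) + t * (- Im w2) < pi/4"
    using assms(1,2) t by (intro convex_bound_lt) auto
  ultimately show ?thesis unfolding I abs_less_iff by (auto simp: algebra_simps)
qed

lemma main_generic:
  fixes A :: "nat \<Rightarrow> real"
  assumes A0: "A 0 = 1" and pos: "\<And>n. A n \<ge> 0"
    and dec: "\<And>n. (2*real (Suc n)+1) * A (Suc n) \<le> (2*real n+1) * A n"
  shows "close_to_convex_wrt (\<lambda>z. z * (\<Sum>n. complex_of_real (A n) * (z^2)^n))
           (\<lambda>z. Ln ((1 + z) / (1 - z)) / 2)"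
proof -
  define f where "f = (\<lambda>z::complex. z * (\<Sum>n. complex_of_real (A n) * (z^2)^n))"
  define g where "g = (\<lambda>z::complex. Ln ((1 + z) / (1 - z)) / 2)"
  define P where "P = (\<lambda>w::complex. \<Sum>n. complex_of_real ((2*real n+1) * A n) * w^n)"
  have fd: "\<And>z. norm z < 1 \<Longrightarrow> (f has_field_derivative P (z^2)) (at z)"
    unfolding f_def P_def by (rule f_deriv[OF A0 pos dec])
  have gd: "\<And>z. norm z < 1 \<Longrightarrow> (g has_field_derivative 1 / ((1 + z) * (1 - z))) (at z)"
    unfolding g_def by (rule g_deriv)
  have RP: "\<And>w. norm w < 1 \<Longrightarrow> Re (P w * (1 - w)) > 0"
    unfolding P_def by (rule Re_pos[OF A0 pos dec])
  have hol: "f holomorphic_on ball 0 1"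
    unfolding holomorphic_on_def field_differentiable_def
    using fd has_field_derivative_at_within by fastforce
  have f0: "f 0 = 0" unfolding f_def by simp
  have "deriv f 0 = P (0^2)" using fd[of 0] by (simp add: DERIV_imp_deriv)
  also have "P (0^2) = 1" unfolding P_def using A0 powser_zero[of "\<lambda>n. complex_of_real ((2*real n+1) * A n)"] by simp
  finally have df0: "deriv f 0 = 1" .
  have RE: "\<forall>z\<in>ball 0 1. Re (deriv f z / deriv g z) > 0"
  proof
    fix z :: complex assume "z \<in> ball 0 1"
    then have z: "norm z < 1" by simp
    have w: "norm (z^2) < 1" using z by (simp add: norm_power power_less_one_iff)
    have "deriv f z / deriv g z = P (z^2) / (1 / ((1 + z) * (1 - z)))"
      using fd[OF z] gd[OF z] by (simp add: DERIV_imp_deriv)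
    also have "\<dots> = P (z^2) * (1 - z^2)" by (simp add: power2_eq_square algebra_simps)
    finally show "Re (deriv f z / deriv g z) > 0" using RP[OF w] by simp
  qed
  have Fd: "((\<lambda>u. f (phi u)) has_field_derivative P ((phi u)^2) * (1 - (phi u)^2)) (at u)"
    if "\<bar>Im u\<bar> < pi/4" for u
    using DERIV_chain2[OF fd[OF phi_props(1)[OF that]] phi_props(2)[OF that]] .
  have inj: "inj_on f (ball 0 1)"
  proof (rule inj_onI)
    fix z1 z2 :: complex assume z1: "z1 \<in> ball 0 1" and z2: "z2 \<in> ball 0 1" and eq: "f z1 = f z2"
    have n1: "norm z1 < 1" and n2: "norm z2 < 1" using z1 z2 by auto
    define w1 where "w1 = g z1"
    define w2 where "w2 = g z2"
    have s1: "\<bar>Im w1\<bar> < pi/4" "phi w1 = z1" using g_in_strip[OF n1] unfolding w1_def g_def by auto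
    have s2: "\<bar>Im w2\<bar> < pi/4" "phi w2 = z2" using g_in_strip[OF n2] unfolding w2_def g_def by auto
    show "z1 = z2"
    proof (rule ccontr)
      assume "z1 \<noteq> z2"
      then have ne: "w2 - w1 \<noteq> 0" using s1 s2 by auto
      have "\<exists>u. u \<in> closed_segment w1 w2 \<and>
          Re (f (phi w2) / (w2 - w1)) - Re (f (phi w1) / (w2 - w1)) =
          Re (P ((phi u)^2) * (1 - (phi u)^2) / (w2 - w1) * (w2 - w1))"
      proof (rule complex_mvt_line)
        fix u assume "u \<in> closed_segment w1 w2"
        then have "\<bar>Im u\<bar> < pi/4" using strip_segment s1(1) s2(1) by blast
        then show "((\<lambda>u. f (phi u) / (w2 - w1)) has_field_derivative
             P ((phi u)^2) * (1 - (phi u)^2) / (w2 - w1)) (at u)"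
          using Fd by (intro DERIV_cdivide) auto
      qed
      then obtain u where u: "u \<in> closed_segment w1 w2"
        and eqm: "Re (f (phi w2) / (w2 - w1)) - Re (f (phi w1) / (w2 - w1)) =
          Re (P ((phi u)^2) * (1 - (phi u)^2) / (w2 - w1) * (w2 - w1))" by blast
      have "\<bar>Im u\<bar> < pi/4" using strip_segment s1(1) s2(1) u by blast
      then have "norm ((phi u)^2) < 1" using phi_props(1) by (simp add: norm_power power_less_one_iff)
      then have "Re (P ((phi u)^2) * (1 - (phi u)^2)) > 0" by (rule RP)
      moreover have "P ((phi u)^2) * (1 - (phi u)^2) / (w2 - w1) * (w2 - w1) = P ((phi u)^2) * (1 - (phi u)^2)"
        using ne by simp
      moreover have "f (phi w2) = f (phi w1)" using s1 s2 eq by simp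
      ultimately show False using eqm by simp
    qed
  qed
  show ?thesis unfolding close_to_convex_wrt_def f_def[symmetric] g_def[symmetric]
    using hol f0 df0 inj RE by blast
qed

theorem theorem2p2:
  fixes a b c d e :: real
  assumes "a > 0" "b > 0" "c > 0"
    and "\<forall>n::nat. d \<noteq> - real n" "\<forall>n::nat. e \<noteq> - real n"
    and "d * e \<ge> 3 * a * b * c"
    and "d + e \<ge> Max {a + b + c, alpha3 a b c, 3 * (a*b + b*c + a*c) - 7 * a*b*c}"
  shows "close_to_convex_wrt (\<lambda>z. z * hyp3F2 a b c d e (z ^ 2))
           (\<lambda>z. Ln ((1 + z) / (1 - z)) / 2)"
proof -
  have p1: "d + e \<ge> a + b + c" and p2: "d + e \<ge> alpha3 a b c"
    and p3: "d + e \<ge> 3 * (a*b + b*c + a*c) - 7 * a*b*c"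
    using assms(7) by (auto simp: Max_ge_iff)
  have abc: "a * b * c > 0" using assms(1-3) by simp
  have de: "d * e > 0" using assms(6) abc by linarith
  have dp: "d > 0" and ep: "e > 0"
  proof -
    have "d + e > 0" using p1 assms(1-3) by linarith
    then show "d > 0" "e > 0" using de by (auto simp: zero_less_mult_iff)
  qed
  have H: "hyp3F2 a b c d e = (\<lambda>w. \<Sum>n. complex_of_real (cA a b c d e n) * w^n)"
    by (rule ext) (simp add: hyp3F2_def cA_def)
  show ?thesis unfolding H
  proof (rule main_generic)
    show "cA a b c d e 0 = 1" by (rule cA_0)
    show "\<And>n. 0 \<le> cA a b c d e n" using cA_pos[OF assms(1-3) dp ep] by (simp add: less_imp_le)
    show "\<And>n. (2*real (Suc n)+1) * cA a b c d e (Suc n) \<le> (2*real n+1) * cA a b c d e n"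
      by (rule cA_dec[OF assms(1-3) dp ep assms(6) p1 p2 p3])
  qed
qed


end
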